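(* Let $e:\mathbb{R}^3\to\mathbb{R}^4$ be the map $e(x_1,x_2,x_3)=(-x_1+x_2+x_3,\ x_1-x_2+x_3,\ x_1+x_2-x_3,\ x_1+x_2+x_3)$, which is an isometric embedding of $(\mathbb{R}^3,\ell_1)$ into $(\mathbb{R}^4,\ell_\infty)$. Let $X\subseteq\mathbb{R}^3$ be $1/8$-dense in $(\mathbb{R}^3,\ell_1)$. Then the open $1$-neighborhood $N_1(e(X))=\{y\in\mathbb{R}^4:\exists x\in X,\ \|y-e(x)\|_\infty<1\}$ of $e(X)$ in $(\mathbb{R}^4,\ell_\infty)$ is contractible.
   Context: $\ell_1$ metric: $\|x-y\|_1=\sum_i|x_i-y_i|$; $\ell_\infty$ metric: $\|x-y\|_\infty=\max_i|x_i-y_i|$. A subset $K$ of a metric space $Y$ is $\epsilon$-dense if for every $y\in Y$ there exists $k\in K$ with $d_Y(y,k)<\epsilon$. *)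

theory Defs
  imports "HOL-Analysis.Analysis"
begin

definition l1_dist :: "real^3 \<Rightarrow> real^3 \<Rightarrow> real" where
  "l1_dist x y = (\<Sum>i\<in>UNIV. \<bar>x$i - y$i\<bar>)"

definition linf_dist :: "real^4 \<Rightarrow> real^4 \<Rightarrow> real" where
  "linf_dist x y = Max (range (\<lambda>i. \<bar>x$i - y$i\<bar>))"

definition emb :: "real^3 \<Rightarrow> real^4" where
  "emb x = vector [- x$1 + x$2 + x$3, x$1 - x$2 + x$3, x$1 + x$2 - x$3, x$1 + x$2 + x$3]"

definition l1_dense :: "real \<Rightarrow> (real^3) set \<Rightarrow> bool" where
  "l1_dense \<epsilon> K \<longleftrightarrow> (\<forall>y. \<exists>k\<in>K. l1_dist y k < \<epsilon>)"

definition linf_nbhd :: "real \<Rightarrow> (real^4) set \<Rightarrow> (real^4) set" where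
  "linf_nbhd r A = {y. \<exists>a\<in>A. linf_dist y a < r}"

end

theory Submission imports Defs begin
lemma emb_c: "emb x $ 1 = - x$1 + x$2 + x$3" "emb x $ 2 = x$1 - x$2 + x$3"
  "emb x $ 3 = x$1 + x$2 - x$3" "emb x $ 4 = x$1 + x$2 + x$3"
  by (simp_all add: emb_def vector_def)
lemma linf_lt: "linf_dist y a < r \<longleftrightarrow> (\<forall>i. \<bar>y$i - a$i\<bar> < r)"
  unfolding linf_dist_def by (subst Max_less_iff) auto

definition fz :: "real^4 \<Rightarrow> real" where "fz y = y$1+y$2+y$3-y$4"
definition ww :: "real^4" where "ww = vector [1,1,1,-1]"
definition PP :: "real^4 \<Rightarrow> real^4" where "PP y = y - (fz y / 4) *\<^sub>R ww"

lemma ww_c: "ww$1 = 1" "ww$2 = 1" "ww$3 = 1" "ww$4 = -1"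
  by (simp_all add: ww_def vector_def)

lemma emb_l1: "\<bar>emb a $ i - emb b $ i\<bar> \<le> l1_dist a b"
proof -
  have "i = 1 \<or> i = 2 \<or> i = 3 \<or> i = 4" using exhaust_4 by blast
  then show ?thesis
    unfolding l1_dist_def sum_3 by (auto simp: emb_c abs_le_iff abs_if)
qed

lemma tube:
  assumes d: "l1_dense (1/8) X" and f: "\<bar>fz z\<bar> < 7/2"
  shows "z \<in> linf_nbhd 1 (emb ` X)"
proof -
  define q where "q = PP z"
  define z0 :: "real^3" where "z0 = vector [(q$2+q$3)/2, (q$1+q$3)/2, (q$1+q$2)/2]"
  have q: "q$1 = z$1 - fz z/4" "q$2 = z$2 - fz z/4" "q$3 = z$3 - fz z/4" "q$4 = z$4 + fz z/4"
    by (simp_all add: q_def PP_def ww_c)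
  have eq: "\<bar>z$i - emb z0 $ i\<bar> = \<bar>fz z\<bar>/4" for i
  proof -
    have I: "i = 1 \<or> i = 2 \<or> i = 3 \<or> i = 4" using exhaust_4 by blast
    have e: "emb z0 $ 1 = q$1" "emb z0 $ 2 = q$2" "emb z0 $ 3 = q$3" "emb z0 $ 4 = q$4"
      using q by (simp_all add: emb_c z0_def fz_def vector_def field_simps)
    have "\<bar>fz z / 4\<bar> = \<bar>fz z\<bar>/4" by simp
    then show ?thesis using q e I by (elim disjE) simp_all
  qed
  obtain x where x: "x \<in> X" "l1_dist z0 x < 1/8" using d unfolding l1_dense_def by blast
  have "\<bar>z$i - emb x $ i\<bar> < 1" for i
    using eq[of i] emb_l1[of z0 i x] f x(2) by linarith
  then show ?thesis using x unfolding linf_nbhd_def linf_lt by blast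
qed

lemma fz_emb: "fz (emb a) = 0" by (simp add: fz_def emb_c)

lemma seg1:
  assumes d: "l1_dense (1/8) X" and y: "y \<in> linf_nbhd 1 (emb ` X)"
    and z: "z \<in> closed_segment y (PP y)"
  shows "z \<in> linf_nbhd 1 (emb ` X)"
proof -
  obtain u where u: "0 \<le> u" "u \<le> 1" "z = (1 - u) *\<^sub>R y + u *\<^sub>R PP y"
    using z unfolding closed_segment_def by blast
  define s where "s = u * fz y / 4"
  have zc: "z$1 = y$1 - s" "z$2 = y$2 - s" "z$3 = y$3 - s" "z$4 = y$4 + s"
    by (simp_all add: u(3) PP_def ww_c s_def algebra_simps)
  have fzz: "fz z = fz y - 4 * s" unfolding fz_def zc by simp
  have sb: "(fz y \<ge> 0 \<longrightarrow> 0 \<le> s \<and> s \<le> fz y / 4) \<and> (fz y \<le> 0 \<longrightarrow> fz y / 4 \<le> s \<and> s \<le> 0)"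
    using u unfolding s_def
    by (auto simp: mult_nonneg_nonpos mult_nonneg_nonneg mult_nonpos_nonneg mult_left_le_one_le mult_le_cancel_right1
        intro: mult_nonneg_nonneg)
  show ?thesis
  proof (cases "\<bar>fz z\<bar> < 7/2")
    case True then show ?thesis using tube[OF d] by blast
  next
    case False
    obtain a where a: "a \<in> X" "\<forall>i. \<bar>y$i - emb a $ i\<bar> < 1"
      using y unfolding linf_nbhd_def linf_lt by blast
    have fy: "fz y = (y$1 - emb a$1) + (y$2 - emb a$2) + (y$3 - emb a$3) - (y$4 - emb a$4)"
      using fz_emb[of a] unfolding fz_def by simp
    have a1: "\<bar>y$1 - emb a $ 1\<bar> < 1" "\<bar>y$2 - emb a $ 2\<bar> < 1" "\<bar>y$3 - emb a $ 3\<bar> < 1"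
      "\<bar>y$4 - emb a $ 4\<bar> < 1" using a(2) by auto
    have F: "fz z \<ge> 7/2 \<or> fz z \<le> -7/2" using False by linarith
    have c: "\<bar>z$1 - emb a $ 1\<bar> < 1 \<and> \<bar>z$2 - emb a $ 2\<bar> < 1 \<and> \<bar>z$3 - emb a $ 3\<bar> < 1 \<and> \<bar>z$4 - emb a $ 4\<bar> < 1"
      using a1 fy sb F fzz unfolding zc abs_less_iff
      by (cases "fz y \<ge> 0") linarith+
    have "\<bar>z$i - emb a $ i\<bar> < 1" for i
    proof -
      have "i = 1 \<or> i = 2 \<or> i = 3 \<or> i = 4" using exhaust_4 by blast
      then show ?thesis using c by blast
    qed
    then show ?thesis using a(1) unfolding linf_nbhd_def linf_lt by blast
  qed
qed
lemma fz_PP: "fz (PP y) = 0" by (simp add: fz_def PP_def ww_c field_simps)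

theorem theorem3p2:
  fixes X :: "(real^3) set"
  assumes "l1_dense (1/8) X"
  shows "contractible (linf_nbhd 1 (emb ` X))"
proof -
  let ?N = "linf_nbhd 1 (emb ` X)"
  have cP: "continuous_on ?N PP"
    unfolding PP_def fz_def by (intro continuous_intros) auto
  have h1: "homotopic_with_canon (\<lambda>z. True) ?N ?N id PP"
    by (rule homotopic_with_linear) (auto intro: cP continuous_on_id seg1[OF assms])
  have h2: "homotopic_with_canon (\<lambda>z. True) ?N ?N PP (\<lambda>x. 0)"
  proof (rule homotopic_with_linear[OF cP continuous_on_const])
    fix y assume "y \<in> ?N"
    show "closed_segment (PP y) 0 \<subseteq> ?N"
    proof
      fix z assume "z \<in> closed_segment (PP y) 0"
      then obtain u where zeq: "z = (1 - u) *\<^sub>R PP y + u *\<^sub>R 0" unfolding closed_segment_def by blast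
      have "fz z = (1 - u) * fz (PP y)" unfolding zeq by (simp add: fz_def algebra_simps)
      then have "fz z = 0" using fz_PP[of y] by simp
      then show "z \<in> ?N" using tube[OF assms] by simp
    qed
  qed
  show ?thesis unfolding contractible_def
    using homotopic_with_trans[OF h1 h2] by blast
qed
end
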